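(* Let $\mathbf C$ be an admissible category of coframes. The coreflection $\mathbb P\dashv\mathrm{pt}$ between $\mathbf{Conv}$ and $(\mathbf C^{\mathrm{conv}})^{op}$ restricts to a coreflection of $\mathbf{PreTop}$ into $(\mathbf C^{\mathrm{pretop}})^{op}$, and to a coreflection of $\mathbf{PreTop}$ into $(\mathbf C^{\mathrm{pretop}}_{\mathrm{cl}})^{op}$.
   Context: A category of coframes has coframes as objects and coframe morphisms (preserving arbitrary infima and finite suprema); it is admissible if every powerset $\mathbb P(X)$ is an object and there are classes of index sets $\mathcal I,\mathcal J$ with morphisms exactly the monotone maps preserving existing $I$-indexed infima ($I\in\mathcal I$) and $J$-indexed suprema ($J\in\mathcal J$). A filter on $L$ is a non-empty upward-closed subset closed under binary meets ($L$ allowed); $\mathbb F L$ is the set of filters. A convergence $\mathbf C$-object is $(L,\lim_L)$ with $\lim_L:\mathbb F L\to L$ monotone; $\mathbf C^{\mathrm{conv}}$-morphisms are $\mathbf C$-morphisms $\varphi:L\to L'$ with $\lim_{L'}\mathcal F\le\varphi(\lim_L\varphi^{-1}(\mathcal F))$. Convergence spaces ($\mathbf{Conv}$): a set $X$ with a relation $\to$ between filters of subsets of $X$ and points with $\{S:x\in S\}\to x$ and upward monotonicity in the filter; continuous maps preserve convergence via image filters $f[\mathcal F]=\{B:f^{-1}(B)\in\mathcal F\}$. $\mathbb P(X)$ has $\lim\mathcal F=\{x:\mathcal F\to x\}$, $\mathbb P(f)=f^{-1}$. $\mathrm{pt}\,L$ is the set of $\mathbf C^{\mathrm{conv}}$-morphisms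 $L\to\{\emptyset,\{*\}\}$ (with constant limit $\{*\}$), $\ell^\bullet=\{\psi:\psi(\ell)=\{*\}\}$, $\mathcal F\to\psi$ iff $\psi\in(\lim_L\{\ell:\ell^\bullet\in\mathcal F\})^\bullet$, $\mathrm{pt}\,\varphi(\psi)=\psi\circ\varphi$. It is known that $\mathbb P\dashv\mathrm{pt}$ is an adjunction whose unit is an isomorphism (a coreflection). A pretopological space is a convergence space $X$ with $\lim_{\mathbb P(X)}\bigcap_{i}\mathcal F_i=\bigcap_i\lim_{\mathbb P(X)}\mathcal F_i$ for every family of filters; $\mathbf{PreTop}$ is the full subcategory of these. A pretopological $\mathbf C$-object is a convergence $\mathbf C$-object with $\lim_L\bigcap_{i\in I}\mathcal F_i=\bigwedge_{i\in I}\lim_L\mathcal F_i$ for every family of filters on $L$; $\mathbf C^{\mathrm{pretop}}$ is the full subcategory of these, and $\mathbf C^{\mathrm{pretop}}_{\mathrm{cl}}$ that of classical ones, where $(L,\lim_L)$ is classical if $\mathcal F\cap\mathcal C_L=\mathcal G\cap\mathcal C_L$ implies $\lim_L\mathcal F=\lim_L\mathcal G$, $\mathcal C_L$ being the set of complemented elements. *)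

theory Defs
  imports Main
begin

definition coframe :: "'a::complete_lattice itself \<Rightarrow> bool" where
  "coframe _ \<longleftrightarrow> (\<forall>(x::'a) A. sup x (Inf A) = (INF a\<in>A. sup x a))"

definition coframe_mor :: "('a::complete_lattice \<Rightarrow> 'b::complete_lattice) \<Rightarrow> bool" where
  "coframe_mor \<phi> \<longleftrightarrow> (\<forall>A. \<phi> (Inf A) = Inf (\<phi> ` A)) \<and> \<phi> bot = bot
     \<and> (\<forall>a b. \<phi> (sup a b) = sup (\<phi> a) (\<phi> b))"

text \<open>C-morphisms of an admissible category given by the index-set classes II and JJ.\<close>
definition C_mor :: "'i set set \<Rightarrow> 'j set set \<Rightarrow> ('a::complete_lattice \<Rightarrow> 'b::complete_lattice) \<Rightarrow> bool" where
  "C_mor II JJ \<phi> \<longleftrightarrow> mono \<phi>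
     \<and> (\<forall>I\<in>II. \<forall>f::'i \<Rightarrow> 'a. \<phi> (INF i\<in>I. f i) = (INF i\<in>I. \<phi> (f i)))
     \<and> (\<forall>J\<in>JJ. \<forall>f::'j \<Rightarrow> 'a. \<phi> (SUP j\<in>J. f j) = (SUP j\<in>J. \<phi> (f j)))"

definition adm_hom :: "'i set set \<Rightarrow> 'j set set \<Rightarrow> 'a::complete_lattice itself \<Rightarrow> 'b::complete_lattice itself \<Rightarrow> bool" where
  "adm_hom II JJ _ _ \<longleftrightarrow> (\<forall>\<phi>::'a \<Rightarrow> 'b. C_mor II JJ \<phi> \<longrightarrow> coframe_mor \<phi>)"

definition lfilter :: "'a::complete_lattice set \<Rightarrow> bool" where
  "lfilter F \<longleftrightarrow> F \<noteq> {} \<and> (\<forall>a b. a \<in> F \<longrightarrow> a \<le> b \<longrightarrow> b \<in> F)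
     \<and> (\<forall>a b. a \<in> F \<longrightarrow> b \<in> F \<longrightarrow> inf a b \<in> F)"

definition conv_obj :: "('a::complete_lattice set \<Rightarrow> 'a) \<Rightarrow> bool" where
  "conv_obj lim \<longleftrightarrow> (\<forall>F G. lfilter F \<longrightarrow> lfilter G \<longrightarrow> F \<subseteq> G \<longrightarrow> lim F \<le> lim G)"

definition conv_mor :: "'i set set \<Rightarrow> 'j set set \<Rightarrow> ('a::complete_lattice set \<Rightarrow> 'a)
    \<Rightarrow> ('b::complete_lattice set \<Rightarrow> 'b) \<Rightarrow> ('a \<Rightarrow> 'b) \<Rightarrow> bool" where
  "conv_mor II JJ limL limL' \<phi> \<longleftrightarrow> C_mor II JJ \<phi>
     \<and> (\<forall>F. lfilter F \<longrightarrow> limL' F \<le> \<phi> (limL (\<phi> -` F)))"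

definition pretop_obj :: "('a::complete_lattice set \<Rightarrow> 'a) \<Rightarrow> bool" where
  "pretop_obj lim \<longleftrightarrow> conv_obj lim \<and>
     (\<forall>\<FF>. (\<forall>F\<in>\<FF>. lfilter F) \<longrightarrow> lim (\<Inter>\<FF>) = (INF F\<in>\<FF>. lim F))"

definition complemented :: "'a::complete_lattice set" where
  "complemented = {a. \<exists>b. inf a b = bot \<and> sup a b = top}"

definition classical_obj :: "('a::complete_lattice set \<Rightarrow> 'a) \<Rightarrow> bool" where
  "classical_obj lim \<longleftrightarrow> conv_obj lim \<and>
     (\<forall>F G. lfilter F \<longrightarrow> lfilter G \<longrightarrow> F \<inter> complemented = G \<inter> complemented \<longrightarrow> lim F = lim G)"

definition sfilter :: "'x set \<Rightarrow> 'x set set \<Rightarrow> bool" where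
  "sfilter X F \<longleftrightarrow> F \<subseteq> Pow X \<and> F \<noteq> {}
     \<and> (\<forall>A B. A \<in> F \<longrightarrow> A \<subseteq> B \<longrightarrow> B \<subseteq> X \<longrightarrow> B \<in> F)
     \<and> (\<forall>A B. A \<in> F \<longrightarrow> B \<in> F \<longrightarrow> A \<inter> B \<in> F)"

definition conv_space :: "'x set \<Rightarrow> ('x set set \<Rightarrow> 'x \<Rightarrow> bool) \<Rightarrow> bool" where
  "conv_space X c \<longleftrightarrow> (\<forall>F x. c F x \<longrightarrow> sfilter X F \<and> x \<in> X)
     \<and> (\<forall>x\<in>X. c {S. S \<subseteq> X \<and> x \<in> S} x)
     \<and> (\<forall>F G x. c F x \<longrightarrow> sfilter X G \<longrightarrow> F \<subseteq> G \<longrightarrow> c G x)"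

definition limset :: "'x set \<Rightarrow> ('x set set \<Rightarrow> 'x \<Rightarrow> bool) \<Rightarrow> 'x set set \<Rightarrow> 'x set" where
  "limset X c F = {x\<in>X. c F x}"

definition pretop_space :: "'x set \<Rightarrow> ('x set set \<Rightarrow> 'x \<Rightarrow> bool) \<Rightarrow> bool" where
  "pretop_space X c \<longleftrightarrow> conv_space X c \<and>
     (\<forall>\<FF>. (\<forall>F\<in>\<FF>. sfilter X F) \<longrightarrow>
        limset X c (Pow X \<inter> \<Inter>\<FF>) = X \<inter> (\<Inter>F\<in>\<FF>. limset X c F))"

definition imfilter :: "'x set \<Rightarrow> 'y set \<Rightarrow> ('x \<Rightarrow> 'y) \<Rightarrow> 'x set set \<Rightarrow> 'y set set" where
  "imfilter X Y f F = {B. B \<subseteq> Y \<and> {x\<in>X. f x \<in> B} \<in> F}"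

definition conv_continuous :: "'x set \<Rightarrow> ('x set set \<Rightarrow> 'x \<Rightarrow> bool) \<Rightarrow> 'y set
    \<Rightarrow> ('y set set \<Rightarrow> 'y \<Rightarrow> bool) \<Rightarrow> ('x \<Rightarrow> 'y) \<Rightarrow> bool" where
  "conv_continuous X c Y d f \<longleftrightarrow> f ` X \<subseteq> Y \<and> (\<forall>F x. c F x \<longrightarrow> d (imfilter X Y f F) (f x))"

definition conv_homeo :: "'x set \<Rightarrow> ('x set set \<Rightarrow> 'x \<Rightarrow> bool) \<Rightarrow> 'y set
    \<Rightarrow> ('y set set \<Rightarrow> 'y \<Rightarrow> bool) \<Rightarrow> ('x \<Rightarrow> 'y) \<Rightarrow> bool" where
  "conv_homeo X c Y d f \<longleftrightarrow> bij_betw f X Y \<and> conv_continuous X c Y d f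
     \<and> conv_continuous Y d X c (inv_into X f)"

text \<open>P(X) for a convergence space on the whole type 'x.\<close>
definition limP :: "('x set set \<Rightarrow> 'x \<Rightarrow> bool) \<Rightarrow> 'x set set \<Rightarrow> 'x set" where
  "limP c F = {x. c F x}"

text \<open>The two-element coframe {{},{*}} is unit set; its constant limit is {*} = UNIV.\<close>
definition pt_pts :: "'i set set \<Rightarrow> 'j set set \<Rightarrow> ('l::complete_lattice set \<Rightarrow> 'l) \<Rightarrow> ('l \<Rightarrow> unit set) set" where
  "pt_pts II JJ limL = {\<psi>. conv_mor II JJ limL (\<lambda>_. UNIV) \<psi>}"

definition bullet :: "'i set set \<Rightarrow> 'j set set \<Rightarrow> ('l::complete_lattice set \<Rightarrow> 'l) \<Rightarrow> 'l \<Rightarrow> ('l \<Rightarrow> unit set) set" where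
  "bullet II JJ limL l = {\<psi>\<in>pt_pts II JJ limL. \<psi> l = UNIV}"

definition pt_conv :: "'i set set \<Rightarrow> 'j set set \<Rightarrow> ('l::complete_lattice set \<Rightarrow> 'l)
    \<Rightarrow> ('l \<Rightarrow> unit set) set set \<Rightarrow> ('l \<Rightarrow> unit set) \<Rightarrow> bool" where
  "pt_conv II JJ limL \<FF> \<psi> \<longleftrightarrow> sfilter (pt_pts II JJ limL) \<FF> \<and>
     \<psi> \<in> bullet II JJ limL (limL {l. bullet II JJ limL l \<in> \<FF>})"

definition unitP :: "'x \<Rightarrow> ('x set \<Rightarrow> unit set)" where
  "unitP x = (\<lambda>A. if x \<in> A then UNIV else {})"

end

theory Submission
  imports Defs
begin

lemma unit_eq_UNIV: "((u::unit set) = UNIV) = (() \<in> u)" by auto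
lemma unit_cases: "(u::unit set) = UNIV \<or> u = {}" by auto

lemma cm_Inf: "coframe_mor \<phi> \<Longrightarrow> \<phi> (Inf A) = Inf (\<phi> ` A)"
  unfolding coframe_mor_def by blast
lemma cm_top: "coframe_mor \<phi> \<Longrightarrow> \<phi> top = top"
  using cm_Inf[of \<phi> "{}"] by simp
lemma cm_inf: "coframe_mor \<phi> \<Longrightarrow> \<phi> (inf a b) = inf (\<phi> a) (\<phi> b)"
  using cm_Inf[of \<phi> "{a,b}"] by simp
lemma cm_mono: "coframe_mor \<phi> \<Longrightarrow> mono \<phi>"
proof (rule monoI)
  fix a b :: 'a assume "coframe_mor \<phi>" "a \<le> b"
  then have "\<phi> a = inf (\<phi> a) (\<phi> b)" using cm_inf[of \<phi> a b] by (simp add: inf.absorb1)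
  then show "\<phi> a \<le> \<phi> b" by (metis inf.orderI inf.absorb_iff2 le_inf_iff)
qed

lemma lfilterD:
  assumes "lfilter F"
  shows "F \<noteq> {}" "\<And>a b. a \<in> F \<Longrightarrow> a \<le> b \<Longrightarrow> b \<in> F" "\<And>a b. a \<in> F \<Longrightarrow> b \<in> F \<Longrightarrow> inf a b \<in> F"
  using assms by (simp_all add: lfilter_def)

lemma lfilter_top: "lfilter F \<Longrightarrow> top \<in> F"
  unfolding lfilter_def by auto

lemma lfilter_sfilter: "lfilter (F::'x set set) = sfilter UNIV F"
  unfolding lfilter_def sfilter_def by auto

lemma sfilterD:
  assumes "sfilter X F"
  shows "F \<subseteq> Pow X" "F \<noteq> {}" "\<And>A B. A \<in> F \<Longrightarrow> A \<subseteq> B \<Longrightarrow> B \<subseteq> X \<Longrightarrow> B \<in> F"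
    "\<And>A B. A \<in> F \<Longrightarrow> B \<in> F \<Longrightarrow> A \<inter> B \<in> F"
  using assms by (simp_all add: sfilter_def)

lemma sfilterI:
  assumes "F \<subseteq> Pow X" "F \<noteq> {}" "\<And>A B. A \<in> F \<Longrightarrow> A \<subseteq> B \<Longrightarrow> B \<subseteq> X \<Longrightarrow> B \<in> F"
    "\<And>A B. A \<in> F \<Longrightarrow> B \<in> F \<Longrightarrow> A \<inter> B \<in> F"
  shows "sfilter X F"
  using assms by (simp add: sfilter_def)

lemma sfilter_top: "sfilter X F \<Longrightarrow> X \<in> F"
proof -
  assume s: "sfilter X F"
  obtain A where A: "A \<in> F" using sfilterD(2)[OF s] by blast
  then have "A \<subseteq> X" using sfilterD(1)[OF s] by blast
  then show "X \<in> F" using sfilterD(3)[OF s A] by blast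
qed

lemma conv_spaceD:
  assumes "conv_space X c"
  shows "\<And>F x. c F x \<Longrightarrow> sfilter X F" "\<And>x. x \<in> X \<Longrightarrow> c {S. S \<subseteq> X \<and> x \<in> S} x"
    "\<And>F G x. c F x \<Longrightarrow> sfilter X G \<Longrightarrow> F \<subseteq> G \<Longrightarrow> c G x"
proof -
  note h = conjunct1[OF assms[unfolded conv_space_def]]
    conjunct1[OF conjunct2[OF assms[unfolded conv_space_def]]]
    conjunct2[OF conjunct2[OF assms[unfolded conv_space_def]]]
  show "\<And>F x. c F x \<Longrightarrow> sfilter X F" using h(1) by blast
  show "\<And>x. x \<in> X \<Longrightarrow> c {S. S \<subseteq> X \<and> x \<in> S} x" using h(2) by blast
  show "\<And>F G x. c F x \<Longrightarrow> sfilter X G \<Longrightarrow> F \<subseteq> G \<Longrightarrow> c G x" using h(3) by blast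
qed

lemma conv_objD: "conv_obj lim \<Longrightarrow> lfilter F \<Longrightarrow> lfilter G \<Longrightarrow> F \<subseteq> G \<Longrightarrow> lim F \<le> lim G"
  by (simp add: conv_obj_def)

lemma pts_C: "\<psi> \<in> pt_pts II JJ L \<Longrightarrow> C_mor II JJ \<psi>"
  by (simp add: pt_pts_def conv_mor_def)
lemma pts_conv: "\<psi> \<in> pt_pts II JJ L \<Longrightarrow> lfilter F \<Longrightarrow> UNIV \<le> \<psi> (L (\<psi> -` F))"
  by (simp add: pt_pts_def conv_mor_def)
lemma pts_cm:
  assumes "adm_hom II JJ TYPE('l::complete_lattice) TYPE(unit set)" "\<psi> \<in> pt_pts II JJ (L::'l set \<Rightarrow> 'l)"
  shows "coframe_mor \<psi>"
  using assms pts_C unfolding adm_hom_def by blast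

lemma bullet_iff: "\<psi> \<in> bullet II JJ L l \<longleftrightarrow> \<psi> \<in> pt_pts II JJ L \<and> \<psi> l = UNIV"
  by (simp add: bullet_def)

lemma bullet_sub: "bullet II JJ L l \<subseteq> pt_pts II JJ L"
  by (auto simp: bullet_def)

lemma Phi_lfilter:
  assumes adm: "adm_hom II JJ TYPE('l::complete_lattice) TYPE(unit set)"
    and G: "sfilter (pt_pts II JJ (L::'l set \<Rightarrow> 'l)) G"
  shows "lfilter {l. bullet II JJ L l \<in> G}"
proof -
  let ?P = "pt_pts II JJ L"
  have cm: "\<And>\<psi>. \<psi> \<in> ?P \<Longrightarrow> coframe_mor \<psi>" using pts_cm[OF adm] by blast
  have btop: "bullet II JJ L top = ?P" using cm cm_top by (auto simp: bullet_def)
  have PG: "?P \<in> G" using sfilter_top[OF G] .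
  have bmono: "bullet II JJ L a \<subseteq> bullet II JJ L b" if "a \<le> b" for a b
  proof
    fix \<psi> assume "\<psi> \<in> bullet II JJ L a"
    then have "\<psi> \<in> ?P" "\<psi> a = UNIV" by (auto simp: bullet_def)
    moreover have "\<psi> a \<le> \<psi> b" using cm_mono[OF cm[OF \<open>\<psi> \<in> ?P\<close>]] that by (simp add: mono_def)
    ultimately show "\<psi> \<in> bullet II JJ L b" by (auto simp: bullet_def)
  qed
  have binf: "bullet II JJ L (inf a b) = bullet II JJ L a \<inter> bullet II JJ L b" for a b
  proof -
    have "\<psi> (inf a b) = \<psi> a \<inter> \<psi> b" if "\<psi> \<in> ?P" for \<psi>
      using cm_inf[OF cm[OF that]] by simp
    then show ?thesis unfolding bullet_def by auto
  qed
  show ?thesis unfolding lfilter_def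
  proof (intro conjI allI impI)
    show "{l. bullet II JJ L l \<in> G} \<noteq> {}" using btop PG by (metis (mono_tags, lifting) empty_Collect_eq)
  next
    fix a b assume "a \<in> {l. bullet II JJ L l \<in> G}" "a \<le> b"
    then show "b \<in> {l. bullet II JJ L l \<in> G}"
      using G bmono[of a b] bullet_sub[of II JJ L b] unfolding sfilter_def by blast
  next
    fix a b assume "a \<in> {l. bullet II JJ L l \<in> G}" "b \<in> {l. bullet II JJ L l \<in> G}"
    then show "inf a b \<in> {l. bullet II JJ L l \<in> G}"
      using G binf unfolding sfilter_def by auto
  qed
qed

lemma Phi_mono:
  assumes adm: "adm_hom II JJ TYPE('l::complete_lattice) TYPE(unit set)"
    and L: "conv_obj (L::'l set \<Rightarrow> 'l)"
    and F: "sfilter (pt_pts II JJ L) F" and G: "sfilter (pt_pts II JJ L) G" and FG: "F \<subseteq> G"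
  shows "L {l. bullet II JJ L l \<in> F} \<le> L {l. bullet II JJ L l \<in> G}"
proof -
  have "{l. bullet II JJ L l \<in> F} \<subseteq> {l. bullet II JJ L l \<in> G}" using FG by auto
  then show ?thesis using conv_objD[OF L Phi_lfilter[OF adm F] Phi_lfilter[OF adm G]] by blast
qed

lemma part2:
  assumes adm: "adm_hom II JJ TYPE('l::complete_lattice) TYPE(unit set)"
    and pre: "pretop_obj (L::'l set \<Rightarrow> 'l)"
  shows "pretop_space (pt_pts II JJ L) (pt_conv II JJ L)"
proof -
  let ?P = "pt_pts II JJ L"
  let ?d = "pt_conv II JJ L"
  let ?Phi = "\<lambda>G. {l. bullet II JJ L l \<in> G}"
  have co: "conv_obj L" using pre by (simp add: pretop_obj_def)
  have cm: "\<And>\<psi>. \<psi> \<in> ?P \<Longrightarrow> coframe_mor \<psi>" using pts_cm[OF adm] by blast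
  have cs: "conv_space ?P ?d" unfolding conv_space_def
  proof (intro conjI allI impI ballI)
    fix F x assume "?d F x" then show "sfilter ?P F"
      by (simp add: pt_conv_def bullet_def)
  next
    fix F x assume "?d F x" then show "x \<in> ?P"
      by (simp add: pt_conv_def bullet_def)
  next
    fix \<psi> assume p: "\<psi> \<in> ?P"
    have sf: "sfilter ?P {S. S \<subseteq> ?P \<and> \<psi> \<in> S}" using p unfolding sfilter_def by auto
    have eq: "?Phi {S. S \<subseteq> ?P \<and> \<psi> \<in> S} = \<psi> -` {UNIV}"
      using p bullet_sub by (auto simp: bullet_def)
    have lf: "lfilter {UNIV::unit set}" unfolding lfilter_def by auto
    have "UNIV \<le> \<psi> (L (\<psi> -` {UNIV}))" using pts_conv[OF p lf] .
    then show "?d {S. S \<subseteq> ?P \<and> \<psi> \<in> S} \<psi>"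
      unfolding pt_conv_def using sf eq p by (simp add: bullet_def top.extremum_unique)
  next
    fix F G x assume a: "?d F x" "sfilter ?P G" "F \<subseteq> G"
    then have sF: "sfilter ?P F" and xb: "x \<in> bullet II JJ L (L (?Phi F))"
      by (auto simp: pt_conv_def)
    have le: "L (?Phi F) \<le> L (?Phi G)" using Phi_mono[OF adm co sF a(2) a(3)] .
    have xP: "x \<in> ?P" and xv: "x (L (?Phi F)) = UNIV" using xb by (auto simp: bullet_def)
    have "x (L (?Phi F)) \<le> x (L (?Phi G))" using cm_mono[OF cm[OF xP]] le by (simp add: mono_def)
    then have "x (L (?Phi G)) = UNIV" using xv by auto
    then show "?d G x" using a(2) xP by (simp add: pt_conv_def bullet_def)
  qed
  show ?thesis unfolding pretop_space_def
  proof (intro conjI cs allI impI)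
    fix FF assume FF: "\<forall>F\<in>FF. sfilter ?P F"
    have sfI: "sfilter ?P (Pow ?P \<inter> \<Inter>FF)"
    proof (rule sfilterI)
      show "Pow ?P \<inter> \<Inter>FF \<subseteq> Pow ?P" by blast
      show "Pow ?P \<inter> \<Inter>FF \<noteq> {}" using FF sfilter_top by blast
    next
      fix A B assume "A \<in> Pow ?P \<inter> \<Inter>FF" "A \<subseteq> B" "B \<subseteq> ?P"
      then show "B \<in> Pow ?P \<inter> \<Inter>FF" using FF sfilterD(3) by blast
    next
      fix A B assume "A \<in> Pow ?P \<inter> \<Inter>FF" "B \<in> Pow ?P \<inter> \<Inter>FF"
      then show "A \<inter> B \<in> Pow ?P \<inter> \<Inter>FF" using FF sfilterD(4) by blast
    qed
    have eq: "?Phi (Pow ?P \<inter> \<Inter>FF) = \<Inter>(?Phi ` FF)"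
      using bullet_sub[of II JJ L] by auto
    have lfs: "\<forall>F\<in>?Phi ` FF. lfilter F" using FF Phi_lfilter[OF adm] by blast
    have Leq: "L (\<Inter>(?Phi ` FF)) = (INF F\<in>FF. L (?Phi F))"
      using pre lfs unfolding pretop_obj_def by (simp add: image_image)
    show "limset ?P ?d (Pow ?P \<inter> \<Inter>FF) = ?P \<inter> (\<Inter>F\<in>FF. limset ?P ?d F)"
    proof (rule set_eqI)
      fix \<psi>
      show "\<psi> \<in> limset ?P ?d (Pow ?P \<inter> \<Inter>FF) \<longleftrightarrow> \<psi> \<in> ?P \<inter> (\<Inter>F\<in>FF. limset ?P ?d F)"
      proof (cases "\<psi> \<in> ?P")
        case True
        have "\<psi> (L (\<Inter>(?Phi ` FF))) = (\<Inter>F\<in>FF. \<psi> (L (?Phi F)))"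
          using cm_Inf[OF cm[OF True]] Leq by (simp add: image_image)
        then have "\<psi> (L (\<Inter>(?Phi ` FF))) = UNIV \<longleftrightarrow> (\<forall>F\<in>FF. \<psi> (L (?Phi F)) = UNIV)"
          by auto
        moreover have "\<psi> \<in> limset ?P ?d (Pow ?P \<inter> \<Inter>FF) \<longleftrightarrow> \<psi> (L (\<Inter>(?Phi ` FF))) = UNIV"
          unfolding limset_def pt_conv_def eq using True sfI by (simp add: bullet_iff)
        moreover have "\<psi> \<in> limset ?P ?d F \<longleftrightarrow> \<psi> (L (?Phi F)) = UNIV" if "F \<in> FF" for F
          unfolding limset_def pt_conv_def using True FF that by (simp add: bullet_iff)
        ultimately show ?thesis using True by blast
      next
        case False
        then show ?thesis by (simp add: limset_def)
      qed
    qed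
  qed
qed

lemma unitP_iff: "unitP x A = UNIV \<longleftrightarrow> x \<in> A"
  by (simp add: unitP_def)

lemma unitP_pts:
  assumes cs: "conv_space UNIV c"
  shows "unitP x \<in> pt_pts II JJ (limP c)"
proof -
  have C: "C_mor II JJ (unitP x)" unfolding C_mor_def
    by (auto simp: mono_def unitP_def)
  have "UNIV \<le> unitP x (limP c (unitP x -` F))" if F: "lfilter F" for F
  proof -
    have top: "UNIV \<in> F" using lfilter_top[OF F] by simp
    have sf: "sfilter UNIV (unitP x -` F)" unfolding sfilter_def
    proof (intro conjI allI impI)
      show "unitP x -` F \<subseteq> Pow UNIV" by simp
      show "unitP x -` F \<noteq> {}" using top unitP_iff[of x UNIV] by auto
    next
      fix A B assume "A \<in> unitP x -` F" "A \<subseteq> B" "B \<subseteq> UNIV"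
      moreover have "unitP x A \<le> unitP x B" using \<open>A \<subseteq> B\<close> by (auto simp: unitP_def)
      ultimately show "B \<in> unitP x -` F" using F unfolding lfilter_def by blast
    next
      fix A B assume "A \<in> unitP x -` F" "B \<in> unitP x -` F"
      moreover have "unitP x (A \<inter> B) = unitP x A \<inter> unitP x B" by (auto simp: unitP_def)
      ultimately show "A \<inter> B \<in> unitP x -` F" using lfilterD(3)[OF F] by (simp add: inf_set_def)
    qed
    have sub: "{S. S \<subseteq> UNIV \<and> x \<in> S} \<subseteq> unitP x -` F"
    proof
      fix S assume "S \<in> {S. S \<subseteq> UNIV \<and> x \<in> S}"
      then have "unitP x S = UNIV" by (simp add: unitP_iff)
      then show "S \<in> unitP x -` F" using top by simp
    qed
    have "c {S. S \<subseteq> UNIV \<and> x \<in> S} x" using conv_spaceD(2)[OF cs] by blast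
    then have "c (unitP x -` F) x" using conv_spaceD(3)[OF cs _ sf sub] by blast
    then show ?thesis by (simp add: limP_def unitP_def)
  qed
  then show ?thesis using C by (simp add: pt_pts_def conv_mor_def)
qed

lemma pts_unitP:
  assumes adm: "adm_hom II JJ TYPE('x set) TYPE(unit set)"
    and p: "\<psi> \<in> pt_pts II JJ (L::'x set set \<Rightarrow> 'x set)"
  shows "\<exists>x. \<psi> = unitP x"
proof -
  have cm: "coframe_mor \<psi>" using pts_cm[OF adm p] .
  define A0 where "A0 = \<Inter>{A. \<psi> A = UNIV}"
  have "\<psi> A0 = \<Inter>(\<psi> ` {A. \<psi> A = UNIV})" using cm_Inf[OF cm] unfolding A0_def by simp
  then have A0U: "\<psi> A0 = UNIV" by auto
  have bot: "\<psi> {} = {}" using cm unfolding coframe_mor_def by simp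
  have sup: "\<psi> (A \<union> B) = \<psi> A \<union> \<psi> B" for A B using cm unfolding coframe_mor_def by simp
  have mono: "mono \<psi>" using cm_mono[OF cm] .
  have "A0 \<noteq> {}" using A0U bot by auto
  then obtain x where x: "x \<in> A0" by auto
  have "\<psi> {x} = UNIV"
  proof (rule ccontr)
    assume n: "\<psi> {x} \<noteq> UNIV"
    have "A0 = {x} \<union> (A0 - {x})" using x by auto
    then have "\<psi> A0 = \<psi> {x} \<union> \<psi> (A0 - {x})" using sup by metis
    then have "\<psi> (A0 - {x}) = UNIV" using n A0U unit_cases[of "\<psi> {x}"] by auto
    then have "A0 \<subseteq> A0 - {x}" unfolding A0_def by blast
    then show False using x by auto
  qed
  have "\<psi> A = unitP x A" for A
  proof (cases "x \<in> A")
    case True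
    then have "\<psi> {x} \<le> \<psi> A" using mono by (simp add: mono_def)
    then show ?thesis using True \<open>\<psi> {x} = UNIV\<close> by (auto simp: unitP_def)
  next
    case False
    have "\<psi> A \<noteq> UNIV"
    proof
      assume "\<psi> A = UNIV" then have "A0 \<subseteq> A" unfolding A0_def by blast
      then show False using x False by auto
    qed
    then show ?thesis using False unit_cases[of "\<psi> A"] by (auto simp: unitP_def)
  qed
  then show ?thesis by blast
qed

lemma part3:
  fixes L :: "'l::complete_lattice set \<Rightarrow> 'l" and c :: "'x set set \<Rightarrow> 'x \<Rightarrow> bool"
    and II :: "'i set set" and JJ :: "'j set set"
  assumes f: "conv_continuous UNIV c (pt_pts II JJ L) (pt_conv II JJ L) f"
  shows "\<exists>!\<phi>. conv_mor II JJ L (limP c) \<phi> \<and> (\<forall>x. f x = unitP x \<circ> \<phi>)"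
proof -
  let ?P = "pt_pts II JJ L"
  define \<phi> where "\<phi> = (\<lambda>l. {x. f x l = UNIV})"
  have fP: "f x \<in> ?P" for x using f by (auto simp: conv_continuous_def)
  have fC: "C_mor II JJ (f x)" for x using pts_C[OF fP] .
  have comp: "\<forall>x. f x = unitP x \<circ> \<phi>"
  proof
    fix x show "f x = unitP x \<circ> \<phi>"
    proof
      fix l show "f x l = (unitP x \<circ> \<phi>) l"
        using unit_cases[of "f x l"] by (auto simp: \<phi>_def unitP_def)
    qed
  qed
  have C: "C_mor II JJ \<phi>" unfolding C_mor_def
  proof (intro conjI ballI allI)
    show "mono \<phi>"
    proof (rule monoI)
      fix a b :: 'l assume "a \<le> b"
      then have "f x a \<le> f x b" for x using fC[of x] by (simp add: C_mor_def mono_def)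
      then show "\<phi> a \<le> \<phi> b" by (auto simp: \<phi>_def top.extremum_unique)
    qed
  next
    fix I and g :: "'i \<Rightarrow> 'l" assume I: "I \<in> II"
    have "f x (INF i\<in>I. g i) = (INF i\<in>I. f x (g i))" for x using fC[of x] I by (simp add: C_mor_def)
    then show "\<phi> (INF i\<in>I. g i) = (INF i\<in>I. \<phi> (g i))"
      by (auto simp: \<phi>_def unit_eq_UNIV)
  next
    fix J and g :: "'j \<Rightarrow> 'l" assume J: "J \<in> JJ"
    have "f x (SUP j\<in>J. g j) = (SUP j\<in>J. f x (g j))" for x using fC[of x] J by (simp add: C_mor_def)
    then show "\<phi> (SUP j\<in>J. g j) = (SUP j\<in>J. \<phi> (g j))"
      by (auto simp: \<phi>_def unit_eq_UNIV)
  qed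
  have conv: "limP c F \<le> \<phi> (L (\<phi> -` F))" if F: "lfilter F" for F
  proof
    fix x assume "x \<in> limP c F"
    then have "c F x" by (simp add: limP_def)
    then have d: "pt_conv II JJ L (imfilter UNIV ?P f F) (f x)" using f by (simp add: conv_continuous_def)
    have eq: "{l. bullet II JJ L l \<in> imfilter UNIV ?P f F} = \<phi> -` F"
    proof -
      have "{y. f y \<in> bullet II JJ L l} = \<phi> l" for l using fP by (auto simp: bullet_def \<phi>_def)
      then show ?thesis using bullet_sub[of II JJ L] by (auto simp: imfilter_def)
    qed
    show "x \<in> \<phi> (L (\<phi> -` F))" using d eq by (simp add: pt_conv_def bullet_def \<phi>_def)
  qed
  have cm: "conv_mor II JJ L (limP c) \<phi>" using C conv by (simp add: conv_mor_def)
  show ?thesis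
  proof (rule ex1I[of _ \<phi>])
    show "conv_mor II JJ L (limP c) \<phi> \<and> (\<forall>x. f x = unitP x \<circ> \<phi>)" using cm comp by blast
  next
    fix \<chi> assume "conv_mor II JJ L (limP c) \<chi> \<and> (\<forall>x. f x = unitP x \<circ> \<chi>)"
    then have h: "f x l = unitP x (\<chi> l)" for x l by (metis comp_apply)
    show "\<chi> = \<phi>"
    proof (rule ext, rule set_eqI)
      fix l x show "x \<in> \<chi> l \<longleftrightarrow> x \<in> \<phi> l" using h[of x l] by (simp add: \<phi>_def unitP_iff)
    qed
  qed
qed

lemma part1:
  fixes c :: "'x set set \<Rightarrow> 'x \<Rightarrow> bool" and II :: "'i set set" and JJ :: "'j set set"
  assumes pre: "pretop_space UNIV c"
    and adm: "adm_hom II JJ TYPE('x set) TYPE(unit set)"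
  shows "pretop_obj (limP c) \<and> classical_obj (limP c)
        \<and> conv_homeo UNIV c (pt_pts II JJ (limP c)) (pt_conv II JJ (limP c)) unitP"
proof -
  let ?P = "pt_pts II JJ (limP c)"
  let ?d = "pt_conv II JJ (limP c)"
  have cs: "conv_space UNIV c" using pre by (simp add: pretop_space_def)
  have co: "conv_obj (limP c)" unfolding conv_obj_def
  proof (intro allI impI)
    fix F G :: "'x set set" assume "lfilter F" "lfilter G" "F \<subseteq> G"
    then show "limP c F \<le> limP c G" using conv_spaceD(3)[OF cs] unfolding limP_def lfilter_sfilter by blast
  qed
  have pto: "pretop_obj (limP c)" unfolding pretop_obj_def
  proof (intro conjI co allI impI)
    fix FF :: "'x set set set" assume "\<forall>F\<in>FF. lfilter F"
    then have "\<forall>F\<in>FF. sfilter UNIV F" by (simp add: lfilter_sfilter)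
    then have "limset UNIV c (Pow UNIV \<inter> \<Inter>FF) = UNIV \<inter> (\<Inter>F\<in>FF. limset UNIV c F)"
      using pre by (simp add: pretop_space_def)
    then show "limP c (\<Inter>FF) = (INF F\<in>FF. limP c F)" by (simp add: limset_def limP_def)
  qed
  have compl: "(complemented :: 'x set set) = UNIV"
    unfolding complemented_def by (auto intro!: exI[of _ "- _"])
  have cl: "classical_obj (limP c)" unfolding classical_obj_def using co compl by auto
  have Pimg: "?P = range unitP"
  proof
    show "?P \<subseteq> range unitP" using pts_unitP[OF adm] by blast
    show "range unitP \<subseteq> ?P" using unitP_pts[OF cs] by blast
  qed
  have inj: "inj (unitP :: 'x \<Rightarrow> 'x set \<Rightarrow> unit set)"
  proof (rule injI)
    fix x y :: 'x assume "unitP x = unitP y"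
    then have "unitP x {x} = unitP y {x}" by simp
    then show "x = y" by (simp add: unitP_def split: if_splits)
  qed
  have bij: "bij_betw unitP UNIV ?P" using inj Pimg by (simp add: bij_betw_def)
  have bul: "bullet II JJ (limP c) l = unitP ` l" for l
  proof
    show "bullet II JJ (limP c) l \<subseteq> unitP ` l"
    proof
      fix \<psi> assume "\<psi> \<in> bullet II JJ (limP c) l"
      then have p: "\<psi> \<in> ?P" "\<psi> l = UNIV" by (simp_all add: bullet_def)
      then obtain y where y: "\<psi> = unitP y" using Pimg by blast
      then have "y \<in> l" using p(2) unitP_iff by metis
      then show "\<psi> \<in> unitP ` l" using y by blast
    qed
    show "unitP ` l \<subseteq> bullet II JJ (limP c) l"
    proof
      fix \<psi> assume "\<psi> \<in> unitP ` l"
      then obtain y where y: "\<psi> = unitP y" "y \<in> l" by blast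
      then have "\<psi> \<in> ?P" "\<psi> l = UNIV" using Pimg unitP_iff[of y l] by simp_all
      then show "\<psi> \<in> bullet II JJ (limP c) l" by (simp add: bullet_def)
    qed
  qed
  have c1: "conv_continuous UNIV c ?P ?d unitP" unfolding conv_continuous_def
  proof (intro conjI allI impI)
    show "range unitP \<subseteq> ?P" using Pimg by simp
  next
    fix F x assume cFx: "c F x"
    then have sF: "sfilter UNIV F" using conv_spaceD(1)[OF cs] by blast
    have pre_eq: "{y. unitP y \<in> B} = inv_into UNIV unitP ` B" if "B \<subseteq> ?P" for B
      using that Pimg inj by (auto simp: image_iff) (metis inv_into_f_f UNIV_I)+
    have sfI: "sfilter ?P (imfilter UNIV ?P unitP F)" unfolding sfilter_def imfilter_def
    proof (intro conjI allI impI)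
      show "{B. B \<subseteq> ?P \<and> {xa \<in> UNIV. unitP xa \<in> B} \<in> F} \<subseteq> Pow ?P" by auto
      have "{xa \<in> UNIV. unitP xa \<in> ?P} = UNIV" using Pimg by auto
      then show "{B. B \<subseteq> ?P \<and> {xa \<in> UNIV. unitP xa \<in> B} \<in> F} \<noteq> {}"
        using sfilter_top[OF sF] by auto
    next
      fix A B assume "A \<in> {B. B \<subseteq> ?P \<and> {xa \<in> UNIV. unitP xa \<in> B} \<in> F}" "A \<subseteq> B" "B \<subseteq> ?P"
      then show "B \<in> {B. B \<subseteq> ?P \<and> {xa \<in> UNIV. unitP xa \<in> B} \<in> F}"
        using sF unfolding sfilter_def by (smt (verit, ccfv_threshold) Collect_mono mem_Collect_eq subset_eq top_greatest)
    next
      fix A B assume "A \<in> {B. B \<subseteq> ?P \<and> {xa \<in> UNIV. unitP xa \<in> B} \<in> F}"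
        "B \<in> {B. B \<subseteq> ?P \<and> {xa \<in> UNIV. unitP xa \<in> B} \<in> F}"
      moreover have "{xa \<in> UNIV. unitP xa \<in> A \<inter> B} = {xa \<in> UNIV. unitP xa \<in> A} \<inter> {xa \<in> UNIV. unitP xa \<in> B}" by auto
      ultimately show "A \<inter> B \<in> {B. B \<subseteq> ?P \<and> {xa \<in> UNIV. unitP xa \<in> B} \<in> F}"
        using sF unfolding sfilter_def by auto
    qed
    have "{y. unitP y \<in> unitP ` l} = l" for l :: "'x set" by (auto simp: inj_eq[OF inj])
    then have eq: "{l. bullet II JJ (limP c) l \<in> imfilter UNIV ?P unitP F} = F"
      using Pimg by (auto simp: bul imfilter_def)
    show "?d (imfilter UNIV ?P unitP F) (unitP x)"
      unfolding pt_conv_def using sfI eq cFx by (simp add: bul limP_def)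
  qed
  have c2: "conv_continuous ?P ?d UNIV c (inv_into UNIV unitP)" unfolding conv_continuous_def
  proof (intro conjI allI impI)
    show "inv_into UNIV unitP ` ?P \<subseteq> UNIV" by simp
  next
    fix G \<psi> assume d: "?d G \<psi>"
    then have "\<psi> \<in> ?P" by (simp add: pt_conv_def bullet_def)
    then obtain x where x: "\<psi> = unitP x" using Pimg by auto
    have gx: "inv_into UNIV unitP \<psi> = x" using x inj by simp
    have "{p \<in> ?P. inv_into UNIV unitP p \<in> B} = bullet II JJ (limP c) B" for B
      using Pimg inj by (auto simp: bul)
    then have eq: "imfilter ?P UNIV (inv_into UNIV unitP) G = {l. bullet II JJ (limP c) l \<in> G}"
      by (auto simp: imfilter_def)
    have "unitP x \<in> unitP ` (limP c {l. bullet II JJ (limP c) l \<in> G})"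
      using d x by (simp add: pt_conv_def bul)
    then have "x \<in> limP c {l. bullet II JJ (limP c) l \<in> G}" by (auto simp: inj_eq[OF inj])
    then show "c (imfilter ?P UNIV (inv_into UNIV unitP) G) (inv_into UNIV unitP \<psi>)"
      using eq gx by (simp add: limP_def)
  qed
  show ?thesis using pto cl bij c1 c2 by (simp add: conv_homeo_def)
qed

theorem mainTheorem8:
  fixes II :: "'i set set" and JJ :: "'j set set"
    and c :: "'x set set \<Rightarrow> 'x \<Rightarrow> bool"
    and limL :: "'l::complete_lattice set \<Rightarrow> 'l"
  assumes adm1: "adm_hom II JJ TYPE('l) TYPE('x set)"
    and adm2: "adm_hom II JJ TYPE('l) TYPE(unit set)"
    and adm3: "adm_hom II JJ TYPE('x set) TYPE(unit set)"
    and cof: "coframe TYPE('l)"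
  shows
    "(pretop_space UNIV c \<longrightarrow>
        pretop_obj (limP c) \<and> classical_obj (limP c)
        \<and> conv_homeo UNIV c (pt_pts II JJ (limP c)) (pt_conv II JJ (limP c)) unitP)
     \<and> (pretop_obj limL \<longrightarrow> pretop_space (pt_pts II JJ limL) (pt_conv II JJ limL))
     \<and> (pretop_space UNIV c \<and> pretop_obj limL \<longrightarrow>
          (\<forall>f. conv_continuous UNIV c (pt_pts II JJ limL) (pt_conv II JJ limL) f \<longrightarrow>
             (\<exists>!\<phi>. conv_mor II JJ limL (limP c) \<phi> \<and> (\<forall>x. f x = unitP x \<circ> \<phi>))))"
  using part1[OF _ adm3] part2[OF adm2] part3 by blast

end
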